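(* Let $p$ be an odd prime. For all $n\ge1$, the quotient $A_n/\Phi_nA$ is a rational vector space (i.e. it is divisible and torsion-free as an abelian group).
   Context: $A$ is the ring of degree zero stable operations in $p$-local complex $K$-theory. Fix $q$ primitive mod $p^2$, $\Psi^q\in A$ the Adams operation, $q_i=q^{(-1)^i\lfloor i/2\rfloor}$, $\Theta_n(X)=\prod_{i=1}^n(X-q_i)$, $\Phi_n=\Theta_n(\Psi^q)$; every element of $A$ is uniquely a convergent sum $\sum_{n\ge0}a_n\Phi_n$ with $a_n\in\mathbb{Z}_{(p)}$, and $A_m=\{\sum_{n\ge m}a_n\Phi_n:a_n\in\mathbb{Z}_{(p)}\}$, an ideal of $A$ containing $\Phi_mA$. *)

theory Defs
  imports "HOL-Number_Theory.Number_Theory" "HOL-Computational_Algebra.Polynomial"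
begin

definition zloc :: "nat \<Rightarrow> rat \<Rightarrow> bool" where
  "zloc p r \<longleftrightarrow> \<not> (int p dvd snd (quotient_of r))"

definition primitive_mod :: "nat \<Rightarrow> int \<Rightarrow> bool" where
  "primitive_mod m q \<longleftrightarrow> residue_primroot m (nat (q mod int m))"

definition qnode :: "int \<Rightarrow> nat \<Rightarrow> rat" where
  "qnode q i = (of_int q) powi ((-1) ^ i * int (i div 2))"

definition Theta :: "int \<Rightarrow> nat \<Rightarrow> rat poly" where
  "Theta q n = (\<Prod>i\<in>{1..n}. [:- qnode q i, 1:])"

text \<open>Coordinates of a polynomial in the Newton basis (Theta_k)_k:
  f = c_0 + (X - q_1)(c_1 + (X - q_2)(c_2 + ...)); ncoord q 0 f k = c_k.\<close>
fun ncoord :: "int \<Rightarrow> nat \<Rightarrow> rat poly \<Rightarrow> nat \<Rightarrow> rat" where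
  "ncoord q i f 0 = poly f (qnode q (Suc i))"
| "ncoord q i f (Suc k) =
     ncoord q (Suc i) ((f - [:poly f (qnode q (Suc i)):]) div [:- qnode q (Suc i), 1:]) k"

text \<open>Model of A: an element sum_n a_n Phi_n is its coefficient sequence a (a_n in Z_(p)).\<close>
definition Acar :: "nat \<Rightarrow> (nat \<Rightarrow> rat) set" where
  "Acar p = {a. \<forall>n. zloc p (a n)}"

text \<open>Product in A: Phi_n Phi_m = sum_k ncoord(Theta_n Theta_m, k) Phi_k, a finite sum
  with max(n,m) \<le> k \<le> n+m, extended bilinearly and continuously.\<close>
definition amul :: "int \<Rightarrow> (nat \<Rightarrow> rat) \<Rightarrow> (nat \<Rightarrow> rat) \<Rightarrow> nat \<Rightarrow> rat" where
  "amul q a b k = (\<Sum>n\<le>k. \<Sum>m\<le>k. a n * b m * ncoord q 0 (Theta q n * Theta q m) k)"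

text \<open>Phi_n = Theta_n(Psi^q) as an element of A.\<close>
definition PhiA :: "nat \<Rightarrow> nat \<Rightarrow> rat" where
  "PhiA n = (\<lambda>k. if k = n then 1 else 0)"

definition Aideal :: "nat \<Rightarrow> nat \<Rightarrow> (nat \<Rightarrow> rat) set" where
  "Aideal p m = {a \<in> Acar p. \<forall>k<m. a k = 0}"

definition PhiIdeal :: "nat \<Rightarrow> int \<Rightarrow> nat \<Rightarrow> (nat \<Rightarrow> rat) set" where
  "PhiIdeal p q n = {amul q (PhiA n) x | x. x \<in> Acar p}"

definition quotient_divisible :: "(nat \<Rightarrow> rat) set \<Rightarrow> (nat \<Rightarrow> rat) set \<Rightarrow> bool" where
  "quotient_divisible G H \<longleftrightarrow>
     (\<forall>y\<in>G. \<forall>k::int. k \<noteq> 0 \<longrightarrow> (\<exists>z\<in>G. (\<lambda>i. of_int k * z i - y i) \<in> H))"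

definition quotient_torsion_free :: "(nat \<Rightarrow> rat) set \<Rightarrow> (nat \<Rightarrow> rat) set \<Rightarrow> bool" where
  "quotient_torsion_free G H \<longleftrightarrow>
     (\<forall>y\<in>G. \<forall>k::int. k \<noteq> 0 \<longrightarrow> (\<lambda>i. of_int k * y i) \<in> H \<longrightarrow> y \<in> H)"

end

theory Submission
  imports Defs
begin


lemma zloc_iff:
  assumes "prime p"
  shows "zloc p r \<longleftrightarrow> (\<exists>a b. b \<noteq> 0 \<and> \<not> int p dvd b \<and> r = of_int a / of_int b)"
proof
  assume "zloc p r"
  obtain a b where qb: "quotient_of r = (a, b)" by (cases "quotient_of r")
  have "b > 0" using quotient_of_denom_pos[OF qb] .
  moreover have "r = of_int a / of_int b" using quotient_of_div[OF qb] .
  moreover have "\<not> int p dvd b" using \<open>zloc p r\<close> qb unfolding zloc_def by simp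
  ultimately show "\<exists>a b. b \<noteq> 0 \<and> \<not> int p dvd b \<and> r = of_int a / of_int b" by (intro exI[of _ a] exI[of _ b]) auto
next
  assume "\<exists>a b. b \<noteq> 0 \<and> \<not> int p dvd b \<and> r = of_int a / of_int b"
  then obtain a b where b: "b \<noteq> 0" "\<not> int p dvd b" and r: "r = of_int a / of_int b" by auto
  obtain a' b' where qb: "quotient_of r = (a', b')" by (cases "quotient_of r")
  have b'0: "b' > 0" using quotient_of_denom_pos[OF qb] .
  have r': "r = of_int a' / of_int b'" using quotient_of_div[OF qb] .
  have cop: "coprime a' b'" using quotient_of_coprime[OF qb] .
  have "(of_int a' :: rat) * of_int b = of_int a * of_int b'"
    using r r' b b'0 by (simp add: field_simps)
  hence eq: "a' * b = a * b'" by (metis of_int_eq_iff of_int_mult)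
  hence "b' dvd a' * b" by simp
  hence "b' dvd b" using cop by (meson coprime_commute coprime_dvd_mult_right_iff)
  hence "\<not> int p dvd b'" using b(2) dvd_trans by blast
  thus "zloc p r" unfolding zloc_def using qb by simp
qed

lemma zloc_int: "prime p \<Longrightarrow> zloc p (of_int a)"
proof -
  assume pr: "prime p"
  have "\<not> int p dvd 1" using pr by (metis of_nat_1 of_nat_dvd_iff not_prime_1 nat_dvd_1_iff_1)
  thus ?thesis using zloc_iff[OF pr, of "of_int a"] by (metis div_by_1 of_int_1 one_neq_zero)
qed

lemma zloc_nat: "prime p \<Longrightarrow> zloc p (of_nat a)"
  using zloc_int[of p "int a"] by simp

lemma zloc_add: assumes "prime p" "zloc p r" "zloc p s" shows "zloc p (r + s)"
proof -
  obtain a b where ab: "b \<noteq> 0" "\<not> int p dvd b" "r = of_int a / of_int b" using assms zloc_iff by blast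
  obtain c d where cd: "d \<noteq> 0" "\<not> int p dvd d" "s = of_int c / of_int d" using assms zloc_iff by blast
  have pp: "prime (int p)" using assms(1) by simp
  have "\<not> int p dvd b * d" using ab cd pp by (simp add: prime_dvd_mult_iff)
  moreover have "r + s = of_int (a*d + c*b) / of_int (b*d)" using ab cd by (simp add: field_simps)
  ultimately show ?thesis using assms(1) zloc_iff ab cd by (metis mult_eq_0_iff)
qed

lemma zloc_mult: assumes "prime p" "zloc p r" "zloc p s" shows "zloc p (r * s)"
proof -
  obtain a b where ab: "b \<noteq> 0" "\<not> int p dvd b" "r = of_int a / of_int b" using assms zloc_iff by blast
  obtain c d where cd: "d \<noteq> 0" "\<not> int p dvd d" "s = of_int c / of_int d" using assms zloc_iff by blast
  have pp: "prime (int p)" using assms(1) by simp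
  have "\<not> int p dvd b * d" using ab cd pp by (simp add: prime_dvd_mult_iff)
  moreover have "r * s = of_int (a*c) / of_int (b*d)" using ab cd by (simp add: field_simps)
  ultimately show ?thesis using assms(1) zloc_iff ab cd by (metis mult_eq_0_iff)
qed

lemma zloc_uminus: assumes "prime p" "zloc p r" shows "zloc p (- r)"
  using zloc_mult[OF assms(1) zloc_int[OF assms(1), of "-1"] assms(2)] by simp

lemma zloc_diff: assumes "prime p" "zloc p r" "zloc p s" shows "zloc p (r - s)"
  using zloc_add[OF assms(1) assms(2) zloc_uminus[OF assms(1,3)]] by simp

lemma zloc_divu: assumes "prime p" "zloc p r" "\<not> int p dvd u" shows "zloc p (r / of_int u)"
proof -
  obtain a b where ab: "b \<noteq> 0" "\<not> int p dvd b" "r = of_int a / of_int b" using assms zloc_iff by blast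
  have pp: "prime (int p)" using assms(1) by simp
  have u0: "u \<noteq> 0" using assms(3) by auto
  have "\<not> int p dvd b * u" using ab assms(3) pp by (simp add: prime_dvd_mult_iff)
  moreover have "r / of_int u = of_int a / of_int (b*u)" using ab by simp
  ultimately show ?thesis using assms(1) zloc_iff ab u0 by (metis mult_eq_0_iff)
qed

lemma zloc_sum: assumes "prime p" "\<And>i. i \<in> S \<Longrightarrow> zloc p (f i)" shows "zloc p (\<Sum>i\<in>S. f i)"
  using assms(2)
proof (induction S rule: infinite_finite_induct)
  case (infinite A) then show ?case using zloc_int[OF assms(1), of 0] by simp
next
  case empty then show ?case using zloc_int[OF assms(1), of 0] by simp
next
  case (insert x F) then show ?case using zloc_add[OF assms(1)] by simp
qed

lemma zloc_prod: assumes "prime p" "\<And>i. i \<in> S \<Longrightarrow> zloc p (f i)" shows "zloc p (\<Prod>i\<in>S. f i)"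
  using assms(2)
proof (induction S rule: infinite_finite_induct)
  case (infinite A) then show ?case using zloc_int[OF assms(1), of 1] by simp
next
  case empty then show ?case using zloc_int[OF assms(1), of 1] by simp
next
  case (insert x F) then show ?case using zloc_mult[OF assms(1)] by simp
qed




definition lf :: "rat \<Rightarrow> rat poly" where "lf c = [:- c, 1:]"

lemma lf_nz: "lf c \<noteq> 0" by (simp add: lf_def)
lemma poly_lf: "poly (lf c) x = x - c" by (simp add: lf_def)

fun Th :: "int \<Rightarrow> nat \<Rightarrow> nat \<Rightarrow> rat poly" where
  "Th q i 0 = 1"
| "Th q i (Suc k) = lf (qnode q (Suc i)) * Th q (Suc i) k"

lemma poly_Th_node: "poly (Th q i k) (qnode q (Suc i)) = (if k = 0 then 1 else 0)"
  by (cases k) (auto simp: poly_lf)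

lemma ncoord_unique:
  "ncoord q i (\<Sum>j<N. smult (a j) (Th q i j)) k = (if k < N then a k else 0)"
proof (induction k arbitrary: i a N)
  case 0
  have "poly (\<Sum>j<N. smult (a j) (Th q i j)) (qnode q (Suc i)) = (\<Sum>j<N. a j * (if j = 0 then 1 else 0))"
    by (simp add: poly_sum poly_Th_node)
  also have "\<dots> = (if 0 < N then a 0 else 0)"
    by (simp add: sum.delta' if_distrib cong: if_cong)
  finally show ?case by simp
next
  case (Suc k)
  show ?case
  proof (cases N)
    case 0
    then show ?thesis using Suc.IH[of "Suc i" a 0] by simp
  next
    case (Suc N')
    define g where "g = (\<Sum>j<N'. smult (a (Suc j)) (Th q (Suc i) j))"
    have f: "(\<Sum>j<N. smult (a j) (Th q i j)) = [:a 0:] + lf (qnode q (Suc i)) * g"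
      unfolding g_def Suc sum.lessThan_Suc_shift
      by (simp add: sum_distrib_left mult_smult_right)
    have pf: "poly (\<Sum>j<N. smult (a j) (Th q i j)) (qnode q (Suc i)) = a 0"
      unfolding f by (simp add: poly_lf)
    have d: "((\<Sum>j<N. smult (a j) (Th q i j)) - [:a 0:]) div lf (qnode q (Suc i)) = g"
      unfolding f by (simp add: lf_nz)
    show ?thesis
      using Suc.IH[of "Suc i" "\<lambda>j. a (Suc j)" N'] unfolding ncoord.simps lf_def[symmetric] pf d g_def[symmetric]
      by (simp add: Suc)
  qed
qed

lemma Th_Suc': "Th q i (Suc k) = Th q i k * lf (qnode q (Suc (i + k)))"
  by (induction k arbitrary: i) (auto simp: mult_ac)

lemma Theta_Suc: "Theta q (Suc n) = Theta q n * lf (qnode q (Suc n))"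
  unfolding Theta_def lf_def by (simp add: prod.cl_ivl_Suc)

lemma Theta_0: "Theta q 0 = 1" unfolding Theta_def by simp

lemma Theta_Th: "Theta q n = Th q 0 n"
proof (induction n)
  case 0 then show ?case by (simp add: Theta_0)
next
  case (Suc n) then show ?case by (simp only: Theta_Suc Th_Suc') simp
qed

fun Cc :: "int \<Rightarrow> nat \<Rightarrow> nat \<Rightarrow> nat \<Rightarrow> rat" where
  "Cc q 0 m k = (if k = m then 1 else 0)"
| "Cc q (Suc n) m k = (if k = 0 then 0 else Cc q n m (k - 1))
     + (qnode q (Suc k) - qnode q (Suc n)) * Cc q n m k"

lemma Cc_big: "n + m < k \<Longrightarrow> Cc q n m k = 0"
  by (induction n arbitrary: k) auto

lemma Cc_small_m: "k < m \<Longrightarrow> Cc q n m k = 0"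
  by (induction n arbitrary: k) auto

lemma Cc_small_n: "k < n \<Longrightarrow> Cc q n m k = 0"
proof (induction n arbitrary: k)
  case 0 then show ?case by simp
next
  case (Suc n)
  show ?case
  proof (cases "k < n")
    case True
    then show ?thesis using Suc.IH[of k] Suc.IH[of "k - 1"] by auto
  next
    case False
    then have "k = n" using Suc.prems by simp
    then show ?thesis using Suc.IH[of "k - 1"] by (cases k) auto
  qed
qed

lemma lin_Theta: "lf c * Theta q k = Theta q (Suc k) + smult (qnode q (Suc k) - c) (Theta q k)"
proof -
  have "lf c = lf (qnode q (Suc k)) + [:qnode q (Suc k) - c:]" by (simp add: lf_def)
  then show ?thesis by (simp add: Theta_Suc algebra_simps smult_add_left)
qed

lemma prod_exp:
  "Theta q n * Theta q m = (\<Sum>k<Suc (n + m). smult (Cc q n m k) (Theta q k))"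
proof (induction n)
  case 0
  have "(\<Sum>k<Suc m. smult (Cc q 0 m k) (Theta q k)) = Theta q m"
    by (simp add: if_distrib sum.delta' cong: if_cong)
  then show ?case by (simp add: Theta_0)
next
  case (Suc n)
  define c where "c = qnode q (Suc n)"
  define N where "N = Suc (n + m)"
  have "Theta q (Suc n) * Theta q m = lf c * (Theta q n * Theta q m)"
    by (simp add: Theta_Suc c_def mult_ac)
  also have "\<dots> = (\<Sum>k<N. smult (Cc q n m k) (lf c * Theta q k))"
    unfolding Suc.IH N_def by (simp only: sum_distrib_left mult_smult_right)
  also have "\<dots> = (\<Sum>k<N. smult (Cc q n m k) (Theta q (Suc k)))
       + (\<Sum>k<N. smult ((qnode q (Suc k) - c) * Cc q n m k) (Theta q k))"
    unfolding lin_Theta by (simp add: sum.distrib smult_add_right mult_ac)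
  also have "\<dots> = (\<Sum>k<Suc N. smult (Cc q (Suc n) m k) (Theta q k))"
  proof -
    have A: "(\<Sum>k<Suc N. smult (if k = 0 then 0 else Cc q n m (k - 1)) (Theta q k))
        = (\<Sum>k<N. smult (Cc q n m k) (Theta q (Suc k)))"
      by (subst sum.lessThan_Suc_shift) simp
    have B: "(\<Sum>k<Suc N. smult ((qnode q (Suc k) - c) * Cc q n m k) (Theta q k))
        = (\<Sum>k<N. smult ((qnode q (Suc k) - c) * Cc q n m k) (Theta q k))"
      using Cc_big[of n m N q] by (simp add: N_def)
    show ?thesis
      by (simp only: Cc.simps c_def[symmetric] smult_add_left sum.distrib A B)
  qed
  finally show ?case by (simp add: N_def)
qed

lemma ncoord_prod: "ncoord q 0 (Theta q n * Theta q m) k = Cc q n m k"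
  unfolding prod_exp unfolding Theta_Th ncoord_unique using Cc_big[of n m k q] by auto

definition Sop :: "int \<Rightarrow> nat \<Rightarrow> (nat \<Rightarrow> rat) \<Rightarrow> nat \<Rightarrow> rat" where
  "Sop q n x k = (\<Sum>m\<le>k. Cc q n m k * x m)"

lemma amul_Phi: "amul q (PhiA n) x = Sop q n x"
proof
  fix k
  show "amul q (PhiA n) x k = Sop q n x k"
  proof (cases "n \<le> k")
    case True
    have "amul q (PhiA n) x k = (\<Sum>n'\<le>k. if n' = n then (\<Sum>m\<le>k. x m * Cc q n m k) else 0)"
      unfolding amul_def PhiA_def ncoord_prod by (rule sum.cong) (auto simp: sum_distrib_left)
    also have "\<dots> = (\<Sum>m\<le>k. x m * Cc q n m k)" using True by (simp add: sum.delta')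
    finally show ?thesis unfolding Sop_def by (simp add: mult_ac)
  next
    case False
    then show ?thesis unfolding amul_def PhiA_def Sop_def ncoord_prod
      using Cc_small_n[of k n q] by auto
  qed
qed

definition Mop :: "int \<Rightarrow> rat \<Rightarrow> (nat \<Rightarrow> rat) \<Rightarrow> nat \<Rightarrow> rat" where
  "Mop q c x k = (if k = 0 then 0 else x (k - 1)) + (qnode q (Suc k) - c) * x k"

lemma Sop_0: "Sop q 0 x = x"
proof
  fix k show "Sop q 0 x k = x k"
  proof -
    have "(\<Sum>m\<le>k. (if k = m then 1 else 0) * x m) = (\<Sum>m\<le>k. if k = m then x m else 0)"
      by (rule sum.cong) auto
    also have "\<dots> = x k" by (simp add: sum.delta)
    finally show ?thesis unfolding Sop_def by simp
  qed
qed

lemma Sop_Suc: "Sop q (Suc n) x = Mop q (qnode q (Suc n)) (Sop q n x)"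
proof
  fix k
  have A: "(\<Sum>m\<le>k. (if k = 0 then 0 else Cc q n m (k - 1)) * x m) = (if k = 0 then 0 else Sop q n x (k - 1))"
  proof (cases k)
    case (Suc k')
    have "(\<Sum>m\<le>Suc k'. Cc q n m k' * x m) = (\<Sum>m\<le>k'. Cc q n m k' * x m)"
      using Cc_small_m[of k' "Suc k'" q n] by simp
    then show ?thesis using Suc by (simp add: Sop_def)
  qed simp
  show "Sop q (Suc n) x k = Mop q (qnode q (Suc n)) (Sop q n x) k"
    unfolding Mop_def Sop_def[of q "Suc n"] Cc.simps distrib_right sum.distrib A
    by (simp add: Sop_def sum_distrib_left mult_ac)
qed




definition pdv :: "nat \<Rightarrow> rat \<Rightarrow> bool" where
  "pdv p r \<longleftrightarrow> zloc p (r / of_nat p)"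

lemma pdv_add: "prime p \<Longrightarrow> pdv p r \<Longrightarrow> pdv p s \<Longrightarrow> pdv p (r + s)"
  unfolding pdv_def using zloc_add by (simp add: add_divide_distrib)

lemma pdv_diff: "prime p \<Longrightarrow> pdv p r \<Longrightarrow> pdv p s \<Longrightarrow> pdv p (r - s)"
  unfolding pdv_def using zloc_diff by (simp add: diff_divide_distrib)

lemma pdv_uminus: "prime p \<Longrightarrow> pdv p r \<Longrightarrow> pdv p (- r)"
  unfolding pdv_def using zloc_uminus by simp

lemma pdv_multL: "prime p \<Longrightarrow> pdv p r \<Longrightarrow> zloc p s \<Longrightarrow> pdv p (r * s)"
  unfolding pdv_def using zloc_mult by (metis times_divide_eq_left)

lemma pdv_multR: "prime p \<Longrightarrow> zloc p s \<Longrightarrow> pdv p r \<Longrightarrow> pdv p (s * r)"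
  using pdv_multL by (metis mult.commute)

lemma pdv_zero: "prime p \<Longrightarrow> pdv p 0"
  unfolding pdv_def using zloc_int[of p 0] by simp

lemma pdv_zloc: "prime p \<Longrightarrow> pdv p r \<Longrightarrow> zloc p r"
  unfolding pdv_def using zloc_mult[of p "r / of_nat p" "of_nat p"] zloc_nat[of p p]
  by (simp add: prime_gt_0_nat)

lemma pdv_p: "prime p \<Longrightarrow> zloc p r \<Longrightarrow> pdv p (of_nat p * r)"
  unfolding pdv_def by (simp add: prime_gt_0_nat)

lemma pdv_sum: assumes "prime p" "\<And>i. i \<in> S \<Longrightarrow> pdv p (f i)" shows "pdv p (\<Sum>i\<in>S. f i)"
  using assms(2)
proof (induction S rule: infinite_finite_induct)
  case (infinite A) then show ?case using pdv_zero[OF assms(1)] by simp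
next
  case empty then show ?case using pdv_zero[OF assms(1)] by simp
next
  case (insert x F) then show ?case using pdv_add[OF assms(1)] by simp
qed

lemma pdv_prod:
  assumes "prime p" "finite S" "i \<in> S" "pdv p (f i)" "\<And>j. j \<in> S \<Longrightarrow> zloc p (f j)"
  shows "pdv p (\<Prod>j\<in>S. f j)"
proof -
  have "(\<Prod>j\<in>S. f j) = f i * (\<Prod>j\<in>S - {i}. f j)"
    using assms(2,3) by (simp add: prod.remove)
  moreover have "zloc p (\<Prod>j\<in>S - {i}. f j)" by (rule zloc_prod[OF assms(1)]) (use assms(5) in auto)
  ultimately show ?thesis using pdv_multL[OF assms(1,4)] by simp
qed

lemma zloc_qpow:
  assumes "prime p" "\<not> int p dvd q"
  shows "zloc p (of_int q powi e)"
proof (cases "e \<ge> 0")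
  case True
  then have "of_int q powi e = (of_int (q ^ nat e) :: rat)" by (simp add: power_int_def)
  then show ?thesis using zloc_int[OF assms(1), of "q ^ nat e"] by simp
next
  case False
  then have "of_int q powi e = 1 / (of_int (q ^ nat (- e)) :: rat)"
    by (simp add: power_int_def power_inverse divide_inverse)
  moreover have "\<not> int p dvd q ^ nat (- e)"
    using assms by (metis prime_dvd_power prime_nat_int_transfer)
  ultimately show ?thesis using zloc_divu[OF assms(1) zloc_int[OF assms(1), of 1], of "q ^ nat (- e)"] by simp
qed

lemma zloc_qnode:
  assumes "prime p" "\<not> int p dvd q"
  shows "zloc p (qnode q i)"
  unfolding qnode_def using zloc_qpow[OF assms] by simp

lemma fermat_int:
  assumes "prime p" "\<not> int p dvd q"
  shows "int p dvd q ^ (p - 1) - 1"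
proof -
  define a where "a = nat (q mod int p)"
  have p0: "int p > 0" using assms(1) prime_gt_0_nat by simp
  have qa: "int a = q mod int p" unfolding a_def using p0 by simp
  have "\<not> p dvd a"
  proof
    assume "p dvd a"
    then have "int p dvd q mod int p" using qa by (metis of_nat_dvd_iff)
    then show False using assms(2) by (simp add: dvd_mod_iff)
  qed
  then have "[a ^ (p - 1) = 1] (mod p)" using fermat_theorem[OF assms(1)] by blast
  then have "[int a ^ (p - 1) = 1] (mod int p)" by (metis cong_int_iff of_nat_1 of_nat_power)
  moreover have "[q = int a] (mod int p)" using qa by (simp add: cong_def)
  ultimately have "[q ^ (p - 1) = 1] (mod int p)" using cong_pow cong_trans by blast
  then show ?thesis by (simp add: cong_iff_dvd_diff cong_sym_eq)
qed

lemma pdv_qpow_1: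
  assumes "prime p" "\<not> int p dvd q"
  shows "pdv p (of_int q powi (int (p - 1) * t) - 1)"
proof -
  define Q where "Q = q ^ (p - 1)"
  have pQ: "int p dvd Q - 1" using fermat_int[OF assms] Q_def by simp
  have nQ: "\<not> int p dvd Q" unfolding Q_def
    using assms by (metis prime_dvd_power prime_nat_int_transfer)
  have q0: "q \<noteq> 0" using assms(2) by auto
  have e: "(of_int q :: rat) powi (int (p - 1) * t) = (of_int Q) powi t"
    unfolding Q_def by (simp add: power_int_mult)
  have pn: "int p dvd Q ^ n - 1" for n
  proof -
    have "[Q = 1] (mod int p)" using pQ by (simp add: cong_iff_dvd_diff)
    then have "[Q ^ n = 1 ^ n] (mod int p)" by (rule cong_pow)
    then show ?thesis by (simp add: cong_iff_dvd_diff)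
  qed
  show ?thesis
  proof (cases "t \<ge> 0")
    case True
    then have "(of_int Q :: rat) powi t - 1 = of_int (Q ^ nat t - 1)" by (simp add: power_int_def)
    moreover obtain r where "Q ^ nat t - 1 = int p * r" using pn by (meson dvdE)
    ultimately have "(of_int Q :: rat) powi t - 1 = of_nat p * of_int r" by simp
    then show ?thesis unfolding e using pdv_p[OF assms(1) zloc_int[OF assms(1), of r]] by simp
  next
    case False
    define n where "n = nat (- t)"
    have Qn0: "Q ^ n \<noteq> 0" using nQ by auto
    have "(of_int Q :: rat) powi t - 1 = (1 - of_int (Q ^ n)) / of_int (Q ^ n)"
      using False Qn0 unfolding n_def by (simp add: power_int_def power_inverse field_simps)
    moreover obtain r where r: "Q ^ n - 1 = int p * r" using pn by (meson dvdE)
    moreover have "1 - (of_int (Q ^ n) :: rat) = of_nat p * of_int (- r)"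
    proof -
      have "(of_int (Q ^ n - 1) :: rat) = of_int (int p * r)" using r by simp
      then show ?thesis by (simp only: of_int_diff of_int_mult of_int_minus)
    qed
    ultimately have "(of_int Q :: rat) powi t - 1 = of_nat p * (of_int (- r) / of_int (Q ^ n))"
      by (simp only:) simp
    moreover have "\<not> int p dvd Q ^ n" using nQ assms(1) by (metis prime_dvd_power prime_nat_int_transfer)
    ultimately show ?thesis unfolding e
      using pdv_p[OF assms(1) zloc_divu[OF assms(1) zloc_int[OF assms(1), of "-r"]], of "Q ^ n"] by simp
  qed
qed

lemma pdv_qpow_diff:
  assumes "prime p" "\<not> int p dvd q" "int (p - 1) dvd a - b"
  shows "pdv p (of_int q powi a - of_int q powi b)"
proof -
  obtain t where t: "a - b = int (p - 1) * t" using assms(3) by (meson dvdE)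
  have q0: "(of_int q :: rat) \<noteq> 0" using assms(2) by auto
  have "(of_int q :: rat) powi a = of_int q powi b * of_int q powi (int (p - 1) * t)"
  proof -
    have "a = b + int (p - 1) * t" using t by simp
    then show ?thesis using power_int_add[of "of_int q :: rat" b "int (p - 1) * t"] q0 by simp
  qed
  then have "(of_int q :: rat) powi a - of_int q powi b = of_int q powi b * (of_int q powi (int (p - 1) * t) - 1)"
    by (simp add: algebra_simps)
  then show ?thesis using pdv_multR[OF assms(1) zloc_qpow[OF assms(1,2)] pdv_qpow_1[OF assms(1,2)]] by simp
qed

lemma qnode_even: "qnode q (2 * m) = of_int q powi int m"
  unfolding qnode_def by simp

lemma window:
  assumes "prime p" "\<not> int p dvd q"
  shows "\<exists>i<2 * p. pdv p (qnode q (k + 2 + i) - qnode q j)"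
proof -
  obtain e where e: "qnode q j = of_int q powi e" unfolding qnode_def by blast
  define m0 where "m0 = (k + 3) div 2"
  define r where "r = nat ((e - int m0) mod int (p - 1))"
  have p2: "p \<ge> 2" using assms(1) prime_ge_2_nat by blast
  have r_lt: "r < p - 1" unfolding r_def using p2
    by (simp add: nat_less_iff)
  have r_eq: "int r = (e - int m0) mod int (p - 1)" unfolding r_def using p2 by simp
  define m where "m = m0 + r"
  have dv: "int (p - 1) dvd int m - e"
  proof -
    have "int m - e = int r - (e - int m0)" unfolding m_def by simp
    also have "\<dots> = - (int (p - 1) * ((e - int m0) div int (p - 1)))"
      unfolding r_eq by (simp add: minus_mod_eq_mult_div[symmetric])
    finally show ?thesis by simp
  qed
  have m0a: "2 * m0 \<ge> k + 2" "2 * m0 \<le> k + 3" unfolding m0_def by presburger+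
  have m2: "2 * m = 2 * m0 + 2 * r" by (simp add: m_def)
  have lo: "2 * m \<ge> k + 2" using m2 m0a by linarith
  have hi: "2 * m < k + 2 + 2 * p" using m2 m0a r_lt p2 by linarith
  define i where "i = 2 * m - (k + 2)"
  have "k + 2 + i = 2 * m" using lo unfolding i_def by simp
  then have "qnode q (k + 2 + i) = of_int q powi int m" using qnode_even by simp
  then have "pdv p (qnode q (k + 2 + i) - qnode q j)"
    using pdv_qpow_diff[OF assms dv] e by simp
  moreover have "i < 2 * p" using hi lo unfolding i_def by linarith
  ultimately show ?thesis by blast
qed




lemma Sop_lin: "Sop q n (\<lambda>m. x m + a * x' m) k = Sop q n x k + a * Sop q n x' k"
  unfolding Sop_def by (simp add: algebra_simps sum.distrib sum_distrib_left)

lemma Sop_scale: "Sop q n (\<lambda>m. a * x m) k = a * Sop q n x k"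
  unfolding Sop_def by (simp add: algebra_simps sum_distrib_left)

lemma Sop_div: "Sop q n (\<lambda>m. x m / a) k = Sop q n x k / a"
  unfolding Sop_def by (simp add: sum_divide_distrib)

lemma Sop_zero: "Sop q n (\<lambda>m. 0) k = 0"
  unfolding Sop_def by simp

lemma Mop_lin: "Mop q c (\<lambda>m. x m + a * x' m) k = Mop q c x k + a * Mop q c x' k"
  unfolding Mop_def by (simp add: algebra_simps)

fun Bf :: "int \<Rightarrow> rat \<Rightarrow> (nat \<Rightarrow> rat) \<Rightarrow> nat \<Rightarrow> nat \<Rightarrow> rat" where
  "Bf q c y k 0 = 0"
| "Bf q c y k (Suc t) = y (Suc k) - (qnode q (Suc (Suc k)) - c) * Bf q c y (Suc k) t"

lemma Bf_ident:
  assumes "y = Mop q c x"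
  shows "x k = Bf q c y k t + (-1) ^ t * (\<Prod>i<t. qnode q (k + 2 + i) - c) * x (k + t)"
proof (induction t arbitrary: k)
  case 0 then show ?case by simp
next
  case (Suc t)
  have yk: "y (Suc k) = x k + (qnode q (Suc (Suc k)) - c) * x (Suc k)"
    unfolding assms Mop_def by simp
  have "x k = y (Suc k) - (qnode q (Suc (Suc k)) - c) * x (Suc k)" using yk by simp
  also have "\<dots> = Bf q c y k (Suc t) + (-1) ^ Suc t * (\<Prod>i<Suc t. qnode q (k + 2 + i) - c) * x (k + Suc t)"
    unfolding Suc.IH[of "Suc k"] prod.lessThan_Suc_shift
    by (simp add: algebra_simps)
  finally show ?case .
qed

lemma Bf_diff:
  "Bf q c y k (Suc t) - Bf q c y k t = (-1) ^ t * y (k + t + 1) * (\<Prod>i<t. qnode q (k + 2 + i) - c)"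
proof (induction t arbitrary: k)
  case 0 then show ?case by simp
next
  case (Suc t)
  have "Bf q c y k (Suc (Suc t)) - Bf q c y k (Suc t)
      = - (qnode q (Suc (Suc k)) - c) * (Bf q c y (Suc k) (Suc t) - Bf q c y (Suc k) t)"
    by (simp add: algebra_simps)
  also have "\<dots> = (-1) ^ Suc t * y (k + Suc t + 1) * (\<Prod>i<Suc t. qnode q (k + 2 + i) - c)"
    unfolding Suc.IH prod.lessThan_Suc_shift by (simp add: algebra_simps)
  finally show ?case .
qed

context
  fixes p :: nat and q :: int
  assumes pr: "prime p" and nq: "\<not> int p dvd q"
begin

lemma Cc_zloc: "zloc p (Cc q n m k)"
proof (induction n arbitrary: k)
  case 0 then show ?case using zloc_int[OF pr, of 1] zloc_int[OF pr, of 0] by simp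
next
  case (Suc n)
  have d: "zloc p (qnode q (Suc k) - qnode q (Suc n))"
    using zloc_diff[OF pr zloc_qnode[OF pr nq] zloc_qnode[OF pr nq]] .
  have a: "zloc p (if k = 0 then 0 else Cc q n m (k - 1))"
    using Suc.IH zloc_int[OF pr, of 0] by simp
  show ?case using zloc_add[OF pr a zloc_mult[OF pr d Suc.IH]] by simp
qed

lemma Sop_zloc: "(\<And>m. zloc p (x m)) \<Longrightarrow> zloc p (Sop q n x k)"
  unfolding Sop_def by (intro zloc_sum[OF pr] zloc_mult[OF pr] Cc_zloc) auto

lemma Mop_zloc:
  assumes "zloc p c" "\<And>m. zloc p (x m)"
  shows "zloc p (Mop q c x k)"
proof -
  have a: "zloc p (if k = 0 then 0 else x (k - 1))" using assms(2) zloc_int[OF pr, of 0] by simp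
  show ?thesis unfolding Mop_def
    by (intro zloc_add[OF pr a] zloc_mult[OF pr] zloc_diff[OF pr] zloc_qnode[OF pr nq] assms)
qed

lemma Bf_pdv:
  assumes "zloc p c" "\<And>m. pdv p (y m)"
  shows "pdv p (Bf q c y k t)"
proof (induction t arbitrary: k)
  case 0 then show ?case using pdv_zero[OF pr] by simp
next
  case (Suc t)
  have d: "zloc p (qnode q (Suc (Suc k)) - c)" by (rule zloc_diff[OF pr zloc_qnode[OF pr nq] assms(1)])
  show ?case using pdv_diff[OF pr assms(2) pdv_multR[OF pr d Suc.IH]] by simp
qed

lemma Bf_zloc:
  assumes "zloc p c" "\<And>m. zloc p (y m)"
  shows "zloc p (Bf q c y k t)"
proof (induction t arbitrary: k)
  case 0 then show ?case using zloc_int[OF pr, of 0] by simp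
next
  case (Suc t)
  have d: "zloc p (qnode q (Suc (Suc k)) - c)" by (rule zloc_diff[OF pr zloc_qnode[OF pr nq] assms(1)])
  show ?case using zloc_diff[OF pr assms(2) zloc_mult[OF pr d Suc.IH]] by simp
qed

lemma window_prod:
  "pdv p (\<Prod>i<2 * p. qnode q (k + 2 + i) - qnode q j)"
proof -
  obtain i where i: "i < 2 * p" "pdv p (qnode q (k + 2 + i) - qnode q j)"
    using window[OF pr nq] by blast
  show ?thesis
    by (rule pdv_prod[OF pr, of "{..<2 * p}" i "\<lambda>i. qnode q (k + 2 + i) - qnode q j", OF _ _ i(2)])
       (use i(1) in \<open>auto intro: zloc_diff[OF pr] zloc_qnode[OF pr nq]\<close>)
qed

lemma T_M:
  assumes "\<And>m. zloc p (x m)" "\<And>k. pdv p (Mop q (qnode q j) x k)"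
  shows "pdv p (x k)"
proof -
  define y where "y = Mop q (qnode q j) x"
  have e: "x k = Bf q (qnode q j) y k (2 * p) + (-1) ^ (2 * p) * (\<Prod>i<2 * p. qnode q (k + 2 + i) - qnode q j) * x (k + 2 * p)"
    using Bf_ident[OF y_def] .
  have b: "pdv p (Bf q (qnode q j) y k (2 * p))"
    by (rule Bf_pdv[OF zloc_qnode[OF pr nq]]) (use assms(2) y_def in simp)
  have c: "pdv p ((-1) ^ (2 * p) * (\<Prod>i<2 * p. qnode q (k + 2 + i) - qnode q j) * x (k + 2 * p))"
    using pdv_multL[OF pr window_prod assms(1)] by simp
  show ?thesis unfolding e using pdv_add[OF pr b c] .
qed

lemma T_S:
  "(\<And>m. zloc p (x m)) \<Longrightarrow> (\<And>k. pdv p (Sop q n x k)) \<Longrightarrow> pdv p (x k)"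
proof (induction n arbitrary: k)
  case 0 then show ?case by (simp add: Sop_0)
next
  case (Suc n)
  have "pdv p (Sop q n x k')" for k'
    by (rule T_M[of _ "Suc n"]) (use Sop_zloc Suc.prems in \<open>auto simp: Sop_Suc\<close>)
  then show ?case using Suc.IH Suc.prems by blast
qed

lemma T_S_pow:
  "(\<And>m. zloc p (x m)) \<Longrightarrow> (\<And>k. zloc p (Sop q n x k / of_nat p ^ e)) \<Longrightarrow> zloc p (x k / of_nat p ^ e)"
proof (induction e arbitrary: x k)
  case 0 then show ?case by simp
next
  case (Suc e)
  have p0: "(of_nat p :: rat) \<noteq> 0" using pr prime_gt_0_nat by simp
  have "pdv p (Sop q n x k')" for k'
  proof -
    have "Sop q n x k' / of_nat p = of_nat p ^ e * (Sop q n x k' / of_nat p ^ Suc e)"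
      using p0 by (simp add: field_simps)
    then show ?thesis unfolding pdv_def
      using zloc_mult[OF pr zloc_nat[OF pr, of "p ^ e"] Suc.prems(2)[of k']] by simp
  qed
  then have px: "pdv p (x m)" for m using T_S Suc.prems(1) by blast
  define x' where "x' = (\<lambda>m. x m / of_nat p)"
  have "zloc p (x' k / of_nat p ^ e)"
  proof (rule Suc.IH)
    show "zloc p (x' m)" for m using px unfolding x'_def pdv_def .
    show "zloc p (Sop q n x' k' / of_nat p ^ e)" for k'
      using Suc.prems(2)[of k'] unfolding x'_def Sop_div by (simp add: field_simps)
  qed
  then show ?case unfolding x'_def by (simp add: field_simps)
qed

end


context
  fixes p :: nat and q :: int
  assumes pr: "prime p" and nq: "\<not> int p dvd q"
begin
lemmas Bf_zloc' = Bf_zloc[OF pr nq]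
lemmas window_prod' = window_prod[OF pr nq]

lemma D1:
  assumes "\<And>m. zloc p (y m)" "\<And>k. k \<le> n \<Longrightarrow> y k = 0"
  shows "\<exists>w z. (\<forall>m. zloc p (w m)) \<and> (\<forall>k<n. w k = 0) \<and> (\<forall>m. zloc p (z m)) \<and> (\<forall>k\<le>n. z k = 0)
     \<and> y = (\<lambda>k. of_nat p * z k + Mop q (qnode q (Suc n)) w k)"
proof -
  define c where "c = qnode q (Suc n)"
  define w where "w = (\<lambda>k. if k < n then 0 else Bf q c y k (Suc (2 * p)))"
  define z where "z = (\<lambda>k. (y k - Mop q c w k) / of_nat p)"
  have p0: "(of_nat p :: rat) \<noteq> 0" using pr prime_gt_0_nat by simp
  have cz: "zloc p c" unfolding c_def by (rule zloc_qnode[OF pr nq])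
  have wz: "zloc p (w m)" for m
  proof -
    have "zloc p (Bf q c y k t)" for k t by (rule Bf_zloc'[OF cz]) (rule assms(1))
    then show ?thesis unfolding w_def using zloc_int[OF pr, of 0] by (simp del: Bf.simps)
  qed
  have small: "Mop q c w k = 0" if "k \<le> n" for k
  proof (cases "k < n")
    case True
    have a: "w k = 0" using True by (simp add: w_def)
    have "k - 1 < n" using True by linarith
    then have b: "w (k - 1) = 0" unfolding w_def by (simp only: if_P)
    show ?thesis unfolding Mop_def using a b by simp
  next
    case False
    then have kn: "k = n" using that by simp
    have b: "k \<noteq> 0 \<longrightarrow> w (k - 1) = 0"
    proof
      assume "k \<noteq> 0"
      then have "k - 1 < n" using kn by linarith
      then show "w (k - 1) = 0" unfolding w_def by (simp only: if_P)
    qed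
    have a: "qnode q (Suc k) - c = 0" using kn by (simp add: c_def)
    show ?thesis unfolding Mop_def using a b by simp
  qed
  have big: "pdv p (y k - Mop q c w k)" if nk: "n < k" for k
  proof -
    define k' where "k' = k - 1"
    have k': "k = Suc k'" using nk unfolding k'_def by linarith
    have wk': "w k' = y k - (qnode q (Suc k) - c) * Bf q c y k (2 * p)"
      unfolding w_def k' using nk k' by simp
    have wk: "w k = Bf q c y k (Suc (2 * p))" unfolding w_def using nk by simp
    have "Mop q c w k - y k = (qnode q (Suc k) - c) * (Bf q c y k (Suc (2 * p)) - Bf q c y k (2 * p))"
      unfolding Mop_def using wk wk' k' by (simp del: Bf.simps add: algebra_simps)
    also have "\<dots> = (qnode q (Suc k) - c) * y (k + 2 * p + 1) * (\<Prod>i<2 * p. qnode q (k + 2 + i) - c)"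
      unfolding Bf_diff by simp
    finally have e: "y k - Mop q c w k = - ((qnode q (Suc k) - c) * y (k + 2 * p + 1) * (\<Prod>i<2 * p. qnode q (k + 2 + i) - c))"
      by simp
    have d: "zloc p ((qnode q (Suc k) - c) * y (k + 2 * p + 1))"
      by (intro zloc_mult[OF pr] zloc_diff[OF pr] zloc_qnode[OF pr nq] cz assms(1))
    show ?thesis unfolding e
      by (rule pdv_uminus[OF pr pdv_multR[OF pr d]]) (use window_prod'[of k "Suc n"] c_def in simp)
  qed
  have f1: "\<forall>m. zloc p (w m)" using wz by blast
  have f2: "\<forall>k<n. w k = 0" unfolding w_def by simp
  have f3: "\<forall>m. zloc p (z m)"
  proof
    fix m
    show "zloc p (z m)"
    proof (cases "n < m")
      case True then show ?thesis using big[OF True] unfolding z_def pdv_def by blast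
    next
      case False then show ?thesis unfolding z_def using small[of m] assms(2)[of m] zloc_int[OF pr, of 0] by simp
    qed
  qed
  have f4: "\<forall>k\<le>n. z k = 0" unfolding z_def using small assms(2) by simp
  have f5: "y = (\<lambda>k. of_nat p * z k + Mop q (qnode q (Suc n)) w k)"
    unfolding z_def c_def[symmetric] using p0 by (simp add: field_simps)
  show ?thesis using f1 f2 f3 f4 f5 by blast
qed


lemma Mop_van:
  assumes "\<forall>k<n. x k = 0" "k \<le> n"
  shows "Mop q (qnode q (Suc n)) x k = 0"
proof -
  have b: "k \<noteq> 0 \<longrightarrow> x (k - 1) = 0"
  proof
    assume "k \<noteq> 0"
    then have "k - 1 < n" using assms(2) by linarith
    then show "x (k - 1) = 0" using assms(1) by blast
  qed
  show ?thesis
  proof (cases "k < n")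
    case True
    then have "x k = 0" using assms(1) by blast
    then show ?thesis unfolding Mop_def using b by simp
  next
    case False
    then have "k = n" using assms(2) by simp
    then show ?thesis unfolding Mop_def using b by simp
  qed
qed

lemma D_S:
  "(\<And>m. zloc p (y m)) \<Longrightarrow> (\<And>k. k < n \<Longrightarrow> y k = 0) \<Longrightarrow>
   \<exists>z x. (\<forall>m. zloc p (z m)) \<and> (\<forall>k<n. z k = 0) \<and> (\<forall>m. zloc p (x m))
     \<and> y = (\<lambda>k. of_nat p * z k + Sop q n x k)"
proof (induction n arbitrary: y)
  case 0
  have HH: "(\<forall>m. zloc p ((\<lambda>_. 0::rat) m)) \<and> (\<forall>k<0. (\<lambda>_. 0::rat) k = 0) \<and> (\<forall>m. zloc p (y m))
     \<and> y = (\<lambda>k. of_nat p * (\<lambda>_. 0::rat) k + Sop q 0 y k)"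
    using 0 zloc_int[OF pr, of 0] by (simp add: Sop_0)
  show ?case by (rule exI[of _ "\<lambda>_. 0"], rule exI[of _ y], rule HH)
next
  case (Suc n)
  define c where "c = qnode q (Suc n)"
  obtain w z1 where w: "\<forall>m. zloc p (w m)" "\<forall>k<n. w k = 0" "\<forall>m. zloc p (z1 m)" "\<forall>k\<le>n. z1 k = 0"
      "y = (\<lambda>k. of_nat p * z1 k + Mop q c w k)"
  proof -
    have yv: "\<And>k. k \<le> n \<Longrightarrow> y k = 0" using Suc.prems(2) by simp
    have ex: "\<exists>w z. (\<forall>m. zloc p (w m)) \<and> (\<forall>k<n. w k = 0) \<and> (\<forall>m. zloc p (z m)) \<and> (\<forall>k\<le>n. z k = 0)
     \<and> y = (\<lambda>k. of_nat p * z k + Mop q c w k)"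
      unfolding c_def by (rule D1) (rule Suc.prems(1), rule yv)
    from ex show ?thesis by (elim exE conjE) (rule that)
  qed
  obtain z2 x2 where z2: "\<forall>m. zloc p (z2 m)" "\<forall>k<n. z2 k = 0" "\<forall>m. zloc p (x2 m)"
      "w = (\<lambda>k. of_nat p * z2 k + Sop q n x2 k)"
  proof -
    have ex: "\<exists>z x. (\<forall>m. zloc p (z m)) \<and> (\<forall>k<n. z k = 0) \<and> (\<forall>m. zloc p (x m))
     \<and> w = (\<lambda>k. of_nat p * z k + Sop q n x k)"
      by (rule Suc.IH) (use w(1,2) in simp_all)
    from ex show ?thesis by (elim exE conjE) (rule that)
  qed
  define z where "z = (\<lambda>k. z1 k + Mop q c z2 k)"
  have cz: "zloc p c" unfolding c_def by (rule zloc_qnode[OF pr nq])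
  have "zloc p (z m)" for m
    unfolding z_def using zloc_add[OF pr] w(3) Mop_zloc[OF pr nq cz] z2(1) by blast
  moreover have "z k = 0" if "k < Suc n" for k
    unfolding z_def using w(4) that Mop_van[OF z2(2), of k] c_def by simp
  moreover have "y = (\<lambda>k. of_nat p * z k + Sop q (Suc n) x2 k)"
  proof
    fix k
    have "Mop q c w k = Mop q c (\<lambda>m. Sop q n x2 m + of_nat p * z2 m) k"
      by (simp add: z2(4) add.commute)
    also have "\<dots> = Sop q (Suc n) x2 k + of_nat p * Mop q c z2 k"
      unfolding Mop_lin Sop_Suc c_def by simp
    finally show "y k = of_nat p * z k + Sop q (Suc n) x2 k"
      using w(5) unfolding z_def by (simp add: algebra_simps)
  qed
  ultimately have HH: "(\<forall>m. zloc p (z m)) \<and> (\<forall>k<Suc n. z k = 0) \<and> (\<forall>m. zloc p (x2 m))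
     \<and> y = (\<lambda>k. of_nat p * z k + Sop q (Suc n) x2 k)" using z2(3) by simp
  show ?case by (rule exI[of _ z], rule exI[of _ x2], rule HH)
qed

lemma D_S_pow:
  "(\<And>m. zloc p (y m)) \<Longrightarrow> (\<And>k. k < n \<Longrightarrow> y k = 0) \<Longrightarrow>
   \<exists>z x. (\<forall>m. zloc p (z m)) \<and> (\<forall>k<n. z k = 0) \<and> (\<forall>m. zloc p (x m))
     \<and> y = (\<lambda>k. of_nat p ^ e * z k + Sop q n x k)"
proof (induction e)
  case 0
  have "y = (\<lambda>k. of_nat p ^ 0 * y k + Sop q n (\<lambda>m. 0) k)" by (simp add: Sop_zero)
  moreover have "\<forall>m. zloc p ((\<lambda>m. 0::rat) m)" using zloc_int[OF pr, of 0] by simp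
  ultimately have HH: "(\<forall>m. zloc p (y m)) \<and> (\<forall>k<n. y k = 0) \<and> (\<forall>m. zloc p ((\<lambda>m. 0::rat) m))
     \<and> y = (\<lambda>k. of_nat p ^ 0 * y k + Sop q n (\<lambda>m. 0) k)" using 0 by simp
  show ?case by (rule exI[of _ y], rule exI[of _ "\<lambda>m. 0"], rule HH)
next
  case (Suc e)
  obtain z x where zx: "\<forall>m. zloc p (z m)" "\<forall>k<n. z k = 0" "\<forall>m. zloc p (x m)"
      "y = (\<lambda>k. of_nat p ^ e * z k + Sop q n x k)"
  proof -
    have ex: "\<exists>z x. (\<forall>m. zloc p (z m)) \<and> (\<forall>k<n. z k = 0) \<and> (\<forall>m. zloc p (x m))
     \<and> y = (\<lambda>k. of_nat p ^ e * z k + Sop q n x k)"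
      by (rule Suc.IH) (use Suc.prems in simp_all)
    from ex show ?thesis by (elim exE conjE) (rule that)
  qed
  obtain z' x' where zx': "\<forall>m. zloc p (z' m)" "\<forall>k<n. z' k = 0" "\<forall>m. zloc p (x' m)"
      "z = (\<lambda>k. of_nat p * z' k + Sop q n x' k)"
  proof -
    have ex: "\<exists>z' x'. (\<forall>m. zloc p (z' m)) \<and> (\<forall>k<n. z' k = 0) \<and> (\<forall>m. zloc p (x' m))
     \<and> z = (\<lambda>k. of_nat p * z' k + Sop q n x' k)"
      by (rule D_S) (use zx(1,2) in simp_all)
    from ex show ?thesis by (elim exE conjE) (rule that)
  qed
  define x2 where "x2 = (\<lambda>m. x m + of_nat p ^ e * x' m)"
  have "zloc p (x2 m)" for m
    unfolding x2_def using zloc_add[OF pr] zloc_mult[OF pr] zloc_nat[OF pr, of "p ^ e"] zx(3) zx'(3)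
    by (metis of_nat_power)
  moreover have "y = (\<lambda>k. of_nat p ^ Suc e * z' k + Sop q n x2 k)"
  proof
    fix k
    show "y k = of_nat p ^ Suc e * z' k + Sop q n x2 k"
      unfolding x2_def Sop_lin using zx(4) zx'(4) by (simp add: algebra_simps)
  qed
  ultimately have HH: "(\<forall>m. zloc p (z' m)) \<and> (\<forall>k<n. z' k = 0) \<and> (\<forall>m. zloc p (x2 m))
     \<and> y = (\<lambda>k. of_nat p ^ Suc e * z' k + Sop q n x2 k)" using zx'(1,2) by simp
  show ?case by (rule exI[of _ z'], rule exI[of _ x2], rule HH)
qed

end

lemma pfact:
  assumes "prime p" "(k::int) \<noteq> 0"
  shows "\<exists>e u. k = int p ^ e * u \<and> \<not> int p dvd u"
  using assms(2)
proof (induction "nat \<bar>k\<bar>" arbitrary: k rule: less_induct)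
  case less
  show ?case
  proof (cases "int p dvd k")
    case False
    then show ?thesis by (intro exI[of _ 0] exI[of _ k]) simp
  next
    case True
    then obtain k' where k': "k = int p * k'" by (meson dvdE)
    have p2: "int p \<ge> 2" using assms(1) prime_ge_2_nat by simp
    have k0: "k' \<noteq> 0" using k' less.prems by auto
    have "\<bar>k\<bar> = int p * \<bar>k'\<bar>" using k' p2 by (simp add: abs_mult)
    then have "nat \<bar>k'\<bar> < nat \<bar>k\<bar>" using k0 p2 by (simp add: nat_less_iff)
    then obtain e u where "k' = int p ^ e * u" "\<not> int p dvd u" using less.hyps k0 by blast
    then show ?thesis using k' by (intro exI[of _ "Suc e"] exI[of _ u]) simp
  qed
qed




theorem proposition3p3:
  fixes p :: nat and q :: int and n :: nat
  assumes "prime p" and "odd p"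
    and "primitive_mod (p ^ 2) q"
    and "n \<ge> 1"
  shows "quotient_divisible (Aideal p n) (PhiIdeal p q n)
       \<and> quotient_torsion_free (Aideal p n) (PhiIdeal p q n)"
proof -
  note pr = assms(1)
  have nq: "\<not> int p dvd q"
  proof
    assume pq: "int p dvd q"
    have cop: "coprime (p ^ 2) (nat (q mod int (p ^ 2)))"
      using assms(3) unfolding primitive_mod_def residue_primroot_def by simp
    have "int p dvd q mod int (p ^ 2)"
      using pq by (simp add: dvd_mod_iff)
    moreover have "q mod int (p ^ 2) \<ge> 0" using pr prime_gt_0_nat by simp
    ultimately have "int p dvd int (nat (q mod int (p ^ 2)))" by simp
    then have "p dvd nat (q mod int (p ^ 2))" by (simp only: int_dvd_int_iff)
    moreover have "p dvd p ^ 2" by simp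
    ultimately have "p dvd 1" using cop by (meson coprime_common_divisor)
    then show False using pr by simp
  qed
  have p0: "(of_nat p :: rat) \<noteq> 0" using pr prime_gt_0_nat by simp
  have H: "PhiIdeal p q n = {Sop q n x | x. x \<in> Acar p}"
    unfolding PhiIdeal_def amul_Phi by simp
  have div: "quotient_divisible (Aideal p n) (PhiIdeal p q n)"
    unfolding quotient_divisible_def
  proof (intro ballI allI impI)
    fix y k assume y: "y \<in> Aideal p n" and k: "(k::int) \<noteq> 0"
    obtain e u where eu: "k = int p ^ e * u" "\<not> int p dvd u" using pfact[OF pr k] by blast
    have u0: "u \<noteq> 0" using eu(2) by auto
    have yz: "\<And>m. zloc p (y m)" and yv: "\<And>j. j < n \<Longrightarrow> y j = 0"
      using y unfolding Aideal_def Acar_def by auto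
    have ex: "\<exists>z x. (\<forall>m. zloc p (z m)) \<and> (\<forall>k<n. z k = 0) \<and> (\<forall>m. zloc p (x m))
     \<and> y = (\<lambda>k. of_nat p ^ e * z k + Sop q n x k)"
      by (rule D_S_pow[OF pr nq]) (use yz yv in simp_all)
    then obtain z x where zx: "\<forall>m. zloc p (z m)" "\<forall>k<n. z k = 0" "\<forall>m. zloc p (x m)"
      "y = (\<lambda>k. of_nat p ^ e * z k + Sop q n x k)" by (elim exE conjE)
    define z' where "z' = (\<lambda>i. z i / of_int u)"
    have "z' \<in> Aideal p n"
      unfolding Aideal_def Acar_def z'_def using zx(1,2) zloc_divu[OF pr _ eu(2)] by auto
    moreover have "(\<lambda>i. of_int k * z' i - y i) \<in> PhiIdeal p q n"
    proof -
      have "(\<lambda>i. of_int k * z' i - y i) = Sop q n (\<lambda>m. (-1) * x m)"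
      proof
        fix i
        have "of_int k * z' i - y i = - Sop q n x i"
          unfolding z'_def eu(1) using zx(4) u0 by simp
        then show "of_int k * z' i - y i = Sop q n (\<lambda>m. (-1) * x m) i"
          unfolding Sop_scale by simp
      qed
      moreover have "(\<lambda>m. (-1) * x m) \<in> Acar p"
        unfolding Acar_def using zx(3) zloc_uminus[OF pr] by simp
      ultimately show ?thesis unfolding H by blast
    qed
    ultimately show "\<exists>z\<in>Aideal p n. (\<lambda>i. of_int k * z i - y i) \<in> PhiIdeal p q n" by blast
  qed
  have tf: "quotient_torsion_free (Aideal p n) (PhiIdeal p q n)"
    unfolding quotient_torsion_free_def
  proof (intro ballI allI impI)
    fix y k assume y: "y \<in> Aideal p n" and k: "(k::int) \<noteq> 0"
      and ky: "(\<lambda>i. of_int k * y i) \<in> PhiIdeal p q n"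
    obtain e u where eu: "k = int p ^ e * u" "\<not> int p dvd u" using pfact[OF pr k] by blast
    have u0: "u \<noteq> 0" using eu(2) by auto
    have yz: "\<And>m. zloc p (y m)" using y unfolding Aideal_def Acar_def by auto
    obtain x where x: "x \<in> Acar p" "(\<lambda>i. of_int k * y i) = Sop q n x" using ky unfolding H by blast
    have xz: "\<And>m. zloc p (x m)" using x(1) unfolding Acar_def by auto
    have sx: "Sop q n x i = of_int k * y i" for i using x(2) by metis
    have "zloc p (x m / of_nat p ^ e)" for m
    proof (rule T_S_pow[OF pr nq xz])
      fix i
      have "Sop q n x i / of_nat p ^ e = of_int u * y i"
        unfolding sx eu(1) using p0 by simp
      then show "zloc p (Sop q n x i / of_nat p ^ e)"
        using zloc_mult[OF pr zloc_int[OF pr, of u] yz] by simp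
    qed
    then have "zloc p (x m / of_nat p ^ e / of_int u)" for m using zloc_divu[OF pr _ eu(2)] by blast
    then have xk: "zloc p (x m / of_int k)" for m unfolding eu(1) by (simp add: divide_divide_eq_left)
    have "y = Sop q n (\<lambda>m. x m / of_int k)"
    proof
      fix i show "y i = Sop q n (\<lambda>m. x m / of_int k) i"
        unfolding Sop_div sx using k by simp
    qed
    moreover have "(\<lambda>m. x m / of_int k) \<in> Acar p" unfolding Acar_def using xk by simp
    ultimately show "y \<in> PhiIdeal p q n" unfolding H by blast
  qed
  show ?thesis using div tf by blast
qed


end
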